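(* Let $n,m\ge 1$ and let $f\in L^2((0,1)^n)$ and $h\in L^2((0,1)^m)$ be real-valued, with $f$ not a.e. constant and $h$ not a.e. zero, and define $g\in L^2((0,1)^{n+m})$ by $g(x,\xi)=f(x)h(\xi)$ for $x=(x_1,\dots,x_n)\in(0,1)^n$, $\xi\in(0,1)^m$. Fix $i\in\{1,\dots,n\}$. Then $$S^g_{T_{x_i}}=\lambda_{f,h}\,S^f_{T_{x_i}},\qquad \lambda_{f,h}=\frac{\int f(x)^2\,dx-f_0^2}{\int f(x)^2\,dx-\dfrac{f_0^2h_0^2}{\int h(\xi)^2\,d\xi}}.$$ In particular $S^g_{T_{x_i}}\le S^f_{T_{x_i}}$ and $$S^g_{T_{x_i}}\ge\Big(1-\frac{f_0^2}{\int f(x)^2\,dx}\Big)S^f_{T_{x_i}}.$$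
   Context: All integrals are with respect to Lebesgue measure over the unit cubes (equivalently, the inputs are independent and uniformly distributed on $[0,1]$). For a function $\varphi$, $\varphi_0=\int\varphi$ denotes its mean. For a square-integrable function $\varphi$ of variables $(x,y)$ with $x=(x_1,\dots,x_n)$ and $y$ a further (possibly empty) block of variables, write $x_{\sim i}=(x_1,\dots,x_{i-1},x_{i+1},\dots,x_n)$; the total Sobol sensitivity index of $x_i$ for $\varphi$ is $$S^{\varphi}_{T_{x_i}}=\frac{\int\varphi^2\,dx\,dy-\int\big(\int\varphi\,dx_i\big)^2dx_{\sim i}\,dy}{\int\varphi^2\,dx\,dy-\varphi_0^2},$$ defined when $\mathrm{Var}(\varphi)=\int\varphi^2-\varphi_0^2>0$. *)

theory Defs
  imports "HOL-Probability.Probability"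
begin

definition unit_interval :: "real measure" where
  "unit_interval = restrict_space lborel {0..1}"

text \<open>The unit cube of dimension d: points are (extensional) functions on the
  index set {..<d} (coordinates x_1..x_d are indexed 0..d-1).\<close>
definition unit_cube :: "nat \<Rightarrow> (nat \<Rightarrow> real) measure" where
  "unit_cube d = PiM {..<d} (\<lambda>_. unit_interval)"

text \<open>Total Sobol index of the coordinate i (0-based) for a function phi on the
  d-dimensional unit cube (all remaining coordinates form x_{~i} together with y).\<close>
definition sobol_total :: "nat \<Rightarrow> ((nat \<Rightarrow> real) \<Rightarrow> real) \<Rightarrow> nat \<Rightarrow> real" where
  "sobol_total d \<phi> i =
     ((\<integral>z. (\<phi> z)\<^sup>2 \<partial>unit_cube d)
        - (\<integral>z. (\<integral>t. \<phi> (z(i := t)) \<partial>unit_interval)\<^sup>2 \<partial>unit_cube d))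
     / ((\<integral>z. (\<phi> z)\<^sup>2 \<partial>unit_cube d) - (\<integral>z. \<phi> z \<partial>unit_cube d)\<^sup>2)"

definition tensor_fun :: "nat \<Rightarrow> nat \<Rightarrow> ((nat \<Rightarrow> real) \<Rightarrow> real) \<Rightarrow> ((nat \<Rightarrow> real) \<Rightarrow> real)
    \<Rightarrow> (nat \<Rightarrow> real) \<Rightarrow> real" where
  "tensor_fun n m f h z = f (restrict z {..<n}) * h (restrict (\<lambda>j. z (n + j)) {..<m})"

end

theory Submission
  imports Defs
begin


lemma space_UI: "space unit_interval = {0..1}"
  by (simp add: unit_interval_def space_restrict_space)

lemma sets_UI: "sets unit_interval = sets (restrict_space lborel {0..1})"
  by (simp add: unit_interval_def)

lemma prob_UI: "prob_space unit_interval"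
proof (rule prob_spaceI)
  show "emeasure unit_interval (space unit_interval) = 1"
    unfolding unit_interval_def
    by (simp add: space_restrict_space emeasure_restrict_space)
qed

interpretation UI: prob_space unit_interval by (rule prob_UI)

interpretation PUI: product_sigma_finite "\<lambda>_::nat. unit_interval"
  by (simp add: product_sigma_finite_def prob_UI prob_space_imp_sigma_finite)

lemma prob_cube: "prob_space (unit_cube d)"
  unfolding unit_cube_def by (rule prob_space_PiM) (rule prob_UI)

lemma jensen_sq:
  fixes u :: "'a \<Rightarrow> real"
  assumes "prob_space M" and [measurable]: "u \<in> borel_measurable M" and i2: "integrable M (\<lambda>x. (u x)\<^sup>2)"
  shows "(\<integral>x. u x \<partial>M)\<^sup>2 \<le> (\<integral>x. (u x)\<^sup>2 \<partial>M)"
proof -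
  interpret prob_space M by fact
  have iu: "integrable M u" by (rule square_integrable_imp_integrable[OF assms(2) i2])
  define c where "c = (\<integral>x. u x \<partial>M)"
  have "0 \<le> (\<integral>x. (u x - c)\<^sup>2 \<partial>M)" by simp
  also have "(\<integral>x. (u x - c)\<^sup>2 \<partial>M) = (\<integral>x. (u x)\<^sup>2 - 2 * c * u x + c\<^sup>2 \<partial>M)"
    by (rule Bochner_Integration.integral_cong) (auto simp: power2_eq_square algebra_simps)
  also have "\<dots> = (\<integral>x. (u x)\<^sup>2 - 2 * c * u x \<partial>M) + c\<^sup>2"
    using iu i2 by (subst Bochner_Integration.integral_add) (auto simp: prob_space)
  also have "\<dots> = (\<integral>x. (u x)\<^sup>2 \<partial>M) - 2 * c * c + c\<^sup>2"
    using iu i2 by (subst Bochner_Integration.integral_diff) (auto simp: c_def)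
  finally show ?thesis by (simp add: c_def power2_eq_square)
qed

lemma meas_upd:
  assumes "i < n"
  shows "(\<lambda>(x,t). x(i:=t)) \<in> measurable (unit_cube n \<Otimes>\<^sub>M unit_interval) (unit_cube n)"
proof -
  have "insert i {..<n} = {..<n}" using assms by auto
  then show ?thesis using measurable_add_dim[of i "{..<n}" "\<lambda>_. unit_interval"]
    unfolding unit_cube_def by simp
qed

lemma distr_upd:
  assumes i: "i < n"
  shows "distr (unit_cube n \<Otimes>\<^sub>M unit_interval) (unit_cube n) (\<lambda>(x,t). x(i:=t)) = unit_cube n"
proof -
  have meas: "(\<lambda>(x,t). x(i:=t)) \<in> measurable (unit_cube n \<Otimes>\<^sub>M unit_interval) (unit_cube n)"
    by (rule meas_upd[OF i])
  show ?thesis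
  unfolding unit_cube_def
  proof (rule PUI.PiM_eqI)
    fix A assume A: "\<And>j. j \<in> {..<n} \<Longrightarrow> A j \<in> sets unit_interval"
    have sub: "\<And>j. j \<in> {..<n} \<Longrightarrow> A j \<subseteq> {0..1}"
      using A sets.sets_into_space space_UI by metis
    have pre: "(\<lambda>(x,t). x(i:=t)) -` PiE {..<n} A \<inter> space (PiM {..<n} (\<lambda>_. unit_interval) \<Otimes>\<^sub>M unit_interval)
       = PiE {..<n} (A(i:=space unit_interval)) \<times> A i"
      using i sub apply (auto simp: space_pair_measure space_PiM space_UI PiE_iff extensional_def split: if_splits)
      by (metis atLeastAtMost_iff lessThan_iff subsetD)+
    have Ai: "A i \<in> sets unit_interval" using A i by auto
    have A': "\<And>j. j \<in> {..<n} \<Longrightarrow> (A(i:=space unit_interval)) j \<in> sets unit_interval"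
      using A by auto
    have "emeasure (distr (PiM {..<n} (\<lambda>_. unit_interval) \<Otimes>\<^sub>M unit_interval) (PiM {..<n} (\<lambda>_. unit_interval)) (\<lambda>(x,t). x(i:=t))) (PiE {..<n} A)
      = emeasure (PiM {..<n} (\<lambda>_. unit_interval) \<Otimes>\<^sub>M unit_interval) (PiE {..<n} (A(i:=space unit_interval)) \<times> A i)"
      using meas A by (subst emeasure_distr) (auto simp: unit_cube_def pre)
    also have "\<dots> = emeasure (PiM {..<n} (\<lambda>_. unit_interval)) (PiE {..<n} (A(i:=space unit_interval))) * emeasure unit_interval (A i)"
      using A' Ai by (intro UI.emeasure_pair_measure_Times sets_PiM_I_finite) auto
    also have "\<dots> = (\<Prod>j\<in>{..<n}. emeasure unit_interval ((A(i:=space unit_interval)) j)) * emeasure unit_interval (A i)"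
      using A' by (subst PUI.emeasure_PiM) auto
    also have "\<dots> = (\<Prod>j\<in>{..<n}. emeasure unit_interval (A j))"
    proof -
      have "(\<Prod>j\<in>{..<n}. emeasure unit_interval ((A(i:=space unit_interval)) j))
          = emeasure unit_interval (space unit_interval) * (\<Prod>j\<in>{..<n}-{i}. emeasure unit_interval ((A(i:=space unit_interval)) j))"
        using i by (subst prod.remove[of _ i]) auto
      also have "\<dots> = (\<Prod>j\<in>{..<n}-{i}. emeasure unit_interval (A j))"
        by (simp add: UI.emeasure_space_1)
      finally have 1: "(\<Prod>j\<in>{..<n}. emeasure unit_interval ((A(i:=space unit_interval)) j)) = (\<Prod>j\<in>{..<n}-{i}. emeasure unit_interval (A j))" .
      have 2: "(\<Prod>j\<in>{..<n}. emeasure unit_interval (A j)) = emeasure unit_interval (A i) * (\<Prod>j\<in>{..<n}-{i}. emeasure unit_interval (A j))"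
        using i by (subst prod.remove[of _ i]) auto
      show ?thesis unfolding 1 2 by (simp add: mult.commute)
    qed
    finally show "emeasure (distr (PiM {..<n} (\<lambda>_. unit_interval) \<Otimes>\<^sub>M unit_interval) (PiM {..<n} (\<lambda>_. unit_interval)) (\<lambda>(x,t). x(i:=t))) (PiE {..<n} A)
      = (\<Prod>j\<in>{..<n}. emeasure unit_interval (A j))" .
  qed simp_all
qed

definition join :: "nat \<Rightarrow> nat \<Rightarrow> (nat \<Rightarrow> real) \<times> (nat \<Rightarrow> real) \<Rightarrow> (nat \<Rightarrow> real)" where
  "join n m p = restrict (\<lambda>j. if j < n then fst p j else snd p (j - n)) {..<n+m}"

lemma prod_split_nm:
  fixes g :: "nat \<Rightarrow> 'a::comm_monoid_mult"
  shows "(\<Prod>j<n. g j) * (\<Prod>j<m. g (n+j)) = (\<Prod>j<n+m. g j)"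
  by (induction m) (auto simp: mult.assoc[symmetric])

lemma meas_join: "join n m \<in> measurable (unit_cube n \<Otimes>\<^sub>M unit_cube m) (unit_cube (n+m))"
  unfolding join_def unit_cube_def
proof (rule measurable_restrict)
  fix j assume j: "j \<in> {..<n+m}"
  show "(\<lambda>p. if j < n then fst p j else snd p (j - n)) \<in> measurable (PiM {..<n} (\<lambda>_. unit_interval) \<Otimes>\<^sub>M PiM {..<m} (\<lambda>_. unit_interval)) unit_interval"
  proof (cases "j < n")
    case True
    then show ?thesis by simp
  next
    case False
    then have "j - n \<in> {..<m}" using j by auto
    then show ?thesis using False by simp
  qed
qed

lemma distr_join:
  "distr (unit_cube n \<Otimes>\<^sub>M unit_cube m) (unit_cube (n+m)) (join n m) = unit_cube (n+m)"
proof -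
  note meas = meas_join[of n m]
  interpret Pm: prob_space "unit_cube m" by (rule prob_cube)
  show ?thesis
  unfolding unit_cube_def
  proof (rule PUI.PiM_eqI)
    fix A assume A: "\<And>j. j \<in> {..<n+m} \<Longrightarrow> A j \<in> sets unit_interval"
    have sub: "\<And>j. j \<in> {..<n+m} \<Longrightarrow> A j \<subseteq> {0..1}"
      using A sets.sets_into_space space_UI by metis
    have pre: "join n m -` PiE {..<n+m} A \<inter> space (PiM {..<n} (\<lambda>_. unit_interval) \<Otimes>\<^sub>M PiM {..<m} (\<lambda>_. unit_interval))
       = PiE {..<n} A \<times> PiE {..<m} (\<lambda>j. A (n+j))"
    proof (intro set_eqI iffI)
      fix p assume p: "p \<in> join n m -` PiE {..<n+m} A \<inter> space (PiM {..<n} (\<lambda>_. unit_interval) \<Otimes>\<^sub>M PiM {..<m} (\<lambda>_. unit_interval))"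
      obtain x y where pxy: "p = (x,y)" by force
      have xs: "x \<in> extensional {..<n}" and ys: "y \<in> extensional {..<m}"
        using p pxy by (auto simp: space_pair_measure space_PiM PiE_def)
      have jo: "\<And>j. j < n + m \<Longrightarrow> join n m (x,y) j \<in> A j" using p pxy by auto
      have "x \<in> PiE {..<n} A"
      proof -
        have "x j \<in> A j" if "j < n" for j using jo[of j] that by (simp add: join_def)
        then show ?thesis using xs by (auto simp: PiE_iff)
      qed
      moreover have "y \<in> PiE {..<m} (\<lambda>j. A (n+j))"
      proof -
        have "y j \<in> A (n+j)" if "j < m" for j using jo[of "n+j"] that by (simp add: join_def)
        then show ?thesis using ys by (auto simp: PiE_iff)
      qed
      ultimately show "p \<in> PiE {..<n} A \<times> PiE {..<m} (\<lambda>j. A (n+j))" using pxy by auto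
    next
      fix p assume p: "p \<in> PiE {..<n} A \<times> PiE {..<m} (\<lambda>j. A (n+j))"
      obtain x y where pxy: "p = (x,y)" by force
      have x: "x \<in> PiE {..<n} A" and y: "y \<in> PiE {..<m} (\<lambda>j. A (n+j))" using p pxy by auto
      have "x j \<in> {0..1}" if "j < n" for j using x sub[of j] that by (auto simp: PiE_iff)
      then have "x \<in> space (PiM {..<n} (\<lambda>_. unit_interval))"
        using x by (auto simp: space_PiM space_UI PiE_iff)
      moreover have "y j \<in> {0..1}" if "j < m" for j using y sub[of "n+j"] that by (auto simp: PiE_iff)
      then have "y \<in> space (PiM {..<m} (\<lambda>_. unit_interval))"
        using y by (auto simp: space_PiM space_UI PiE_iff)
      moreover have "join n m (x,y) \<in> PiE {..<n+m} A"
      proof -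
        have "join n m (x,y) j \<in> A j" if "j < n+m" for j
        proof (cases "j < n")
          case True
          then show ?thesis using x that by (auto simp: join_def PiE_iff)
        next
          case False
          then have "j - n < m" "n + (j - n) = j" using that by auto
          moreover have "y (j-n) \<in> A (n+(j-n))" using y \<open>j - n < m\<close> by (auto simp: PiE_iff)
          ultimately show ?thesis using False that by (simp add: join_def)
        qed
        then show ?thesis unfolding PiE_iff by (auto simp: join_def)
      qed
      ultimately show "p \<in> join n m -` PiE {..<n+m} A \<inter> space (PiM {..<n} (\<lambda>_. unit_interval) \<Otimes>\<^sub>M PiM {..<m} (\<lambda>_. unit_interval))"
        using pxy by (auto simp: space_pair_measure)
    qed
    have A1: "\<And>j. j \<in> {..<n} \<Longrightarrow> A j \<in> sets unit_interval" using A by auto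
    have A2: "\<And>j. j \<in> {..<m} \<Longrightarrow> A (n+j) \<in> sets unit_interval" using A by auto
    have "emeasure (distr (PiM {..<n} (\<lambda>_. unit_interval) \<Otimes>\<^sub>M PiM {..<m} (\<lambda>_. unit_interval)) (PiM {..<n+m} (\<lambda>_. unit_interval)) (join n m)) (PiE {..<n+m} A)
      = emeasure (PiM {..<n} (\<lambda>_. unit_interval) \<Otimes>\<^sub>M PiM {..<m} (\<lambda>_. unit_interval)) (PiE {..<n} A \<times> PiE {..<m} (\<lambda>j. A (n+j)))"
      using meas A by (subst emeasure_distr) (auto simp: unit_cube_def pre intro!: sets_PiM_I_finite)
    also have "\<dots> = emeasure (PiM {..<n} (\<lambda>_. unit_interval)) (PiE {..<n} A) * emeasure (PiM {..<m} (\<lambda>_. unit_interval)) (PiE {..<m} (\<lambda>j. A (n+j)))"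
      using A1 A2 Pm.emeasure_pair_measure_Times[of "PiE {..<n} A" "PiM {..<n} (\<lambda>_. unit_interval)" "PiE {..<m} (\<lambda>j. A (n+j))"]
      by (auto simp: unit_cube_def intro!: sets_PiM_I_finite)
    also have "\<dots> = (\<Prod>j<n. emeasure unit_interval (A j)) * (\<Prod>j<m. emeasure unit_interval (A (n+j)))"
      using PUI.emeasure_PiM[of "{..<n}" A] PUI.emeasure_PiM[of "{..<m}" "\<lambda>j. A (n+j)"] A1 A2 by simp
    also have "\<dots> = (\<Prod>j<n+m. emeasure unit_interval (A j))"
      by (rule prod_split_nm)
    finally show "emeasure (distr (PiM {..<n} (\<lambda>_. unit_interval) \<Otimes>\<^sub>M PiM {..<m} (\<lambda>_. unit_interval)) (PiM {..<n+m} (\<lambda>_. unit_interval)) (join n m)) (PiE {..<n+m} A)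
      = (\<Prod>j\<in>{..<n+m}. emeasure unit_interval (A j))" by simp
  qed simp_all
qed




lemma meas_pi1: "(\<lambda>z. restrict z {..<n}) \<in> measurable (unit_cube (n+m)) (unit_cube n)"
  unfolding unit_cube_def by (rule measurable_restrict_subset) auto

lemma meas_pi2: "(\<lambda>z. restrict (\<lambda>j. z (n+j)) {..<m}) \<in> measurable (unit_cube (n+m)) (unit_cube m)"
  unfolding unit_cube_def
proof (rule measurable_restrict)
  fix j assume "j \<in> {..<m}"
  then have "n + j \<in> {..<n+m}" by auto
  then show "(\<lambda>z. z (n+j)) \<in> measurable (PiM {..<n+m} (\<lambda>_. unit_interval)) unit_interval"
    by simp
qed

lemma pair_cube: "pair_prob_space (unit_cube n) (unit_cube m)"
  by (simp add: pair_prob_space_def pair_sigma_finite_def prob_cube prob_space_imp_sigma_finite)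

lemma cube_split:
  fixes K L :: "(nat \<Rightarrow> real) \<Rightarrow> real"
  assumes Km: "K \<in> borel_measurable (unit_cube n)" and Lm: "L \<in> borel_measurable (unit_cube m)"
    and Ki: "integrable (unit_cube n) K" and Li: "integrable (unit_cube m) L"
  shows "(\<integral>z. K (restrict z {..<n}) * L (restrict (\<lambda>j. z (n+j)) {..<m}) \<partial>unit_cube (n+m))
     = (\<integral>x. K x \<partial>unit_cube n) * (\<integral>y. L y \<partial>unit_cube m)"
proof -
  interpret P: pair_prob_space "unit_cube n" "unit_cube m" by (rule pair_cube)
  have Hm: "(\<lambda>z. K (restrict z {..<n}) * L (restrict (\<lambda>j. z (n+j)) {..<m})) \<in> borel_measurable (unit_cube (n+m))"
    by (intro borel_measurable_times measurable_compose[OF meas_pi1 Km] measurable_compose[OF meas_pi2 Lm])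
  have "(\<integral>z. K (restrict z {..<n}) * L (restrict (\<lambda>j. z (n+j)) {..<m}) \<partial>unit_cube (n+m))
     = (\<integral>z. K (restrict z {..<n}) * L (restrict (\<lambda>j. z (n+j)) {..<m}) \<partial>distr (unit_cube n \<Otimes>\<^sub>M unit_cube m) (unit_cube (n+m)) (join n m))"
    by (simp only: distr_join)
  also have "\<dots> = (\<integral>p. K (restrict (join n m p) {..<n}) * L (restrict (\<lambda>j. join n m p (n+j)) {..<m}) \<partial>(unit_cube n \<Otimes>\<^sub>M unit_cube m))"
    by (rule integral_distr[OF meas_join Hm])
  also have "\<dots> = (\<integral>p. K (fst p) * L (snd p) \<partial>(unit_cube n \<Otimes>\<^sub>M unit_cube m))"
  proof (rule Bochner_Integration.integral_cong[OF refl])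
    fix p assume p: "p \<in> space (unit_cube n \<Otimes>\<^sub>M unit_cube m)"
    then have "fst p \<in> extensional {..<n}" "snd p \<in> extensional {..<m}"
      by (auto simp: space_pair_measure unit_cube_def space_PiM PiE_def)
    then have "restrict (join n m p) {..<n} = fst p" "restrict (\<lambda>j. join n m p (n+j)) {..<m} = snd p"
      by (auto simp: join_def restrict_def extensional_def fun_eq_iff)
    then show "K (restrict (join n m p) {..<n}) * L (restrict (\<lambda>j. join n m p (n+j)) {..<m}) = K (fst p) * L (snd p)"
      by simp
  qed
  also have "\<dots> = (\<integral>x. (\<integral>y. K (fst (x,y)) * L (snd (x,y)) \<partial>unit_cube m) \<partial>unit_cube n)"
  proof (rule P.integral_fst'[symmetric])
    show "integrable (unit_cube n \<Otimes>\<^sub>M unit_cube m) (\<lambda>p. K (fst p) * L (snd p))"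
    proof (rule P.Fubini_integrable)
      show "(\<lambda>p. K (fst p) * L (snd p)) \<in> borel_measurable (unit_cube n \<Otimes>\<^sub>M unit_cube m)"
        by (intro borel_measurable_times measurable_compose[OF measurable_fst Km] measurable_compose[OF measurable_snd Lm])
      have "integrable (unit_cube n) (\<lambda>x. \<bar>K x\<bar> * (\<integral>y. \<bar>L y\<bar> \<partial>unit_cube m))"
        using Ki by (intro integrable_mult_left) auto
      then show "integrable (unit_cube n) (\<lambda>x. \<integral>y. norm (K (fst (x, y)) * L (snd (x, y))) \<partial>unit_cube m)"
        by (simp only: real_norm_def fst_conv snd_conv abs_mult integral_mult_right_zero)
      show "AE x in unit_cube n. integrable (unit_cube m) (\<lambda>y. K (fst (x, y)) * L (snd (x, y)))"
        unfolding fst_conv snd_conv by (intro AE_I2 integrable_mult_right[OF Li])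
    qed
  qed
  also have "\<dots> = (\<integral>x. K x * (\<integral>y. L y \<partial>unit_cube m) \<partial>unit_cube n)"
    unfolding fst_conv snd_conv by (rule Bochner_Integration.integral_cong[OF refl]) (rule integral_mult_right_zero)
  also have "\<dots> = (\<integral>x. K x \<partial>unit_cube n) * (\<integral>y. L y \<partial>unit_cube m)"
    by (rule integral_mult_left_zero)
  finally show ?thesis .
qed




lemma var_eq:
  fixes u :: "'a \<Rightarrow> real"
  assumes "prob_space M" and um: "u \<in> borel_measurable M" and i2: "integrable M (\<lambda>x. (u x)\<^sup>2)"
  shows "(\<integral>x. (u x - (\<integral>x. u x \<partial>M))\<^sup>2 \<partial>M) = (\<integral>x. (u x)\<^sup>2 \<partial>M) - (\<integral>x. u x \<partial>M)\<^sup>2"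
proof -
  interpret prob_space M by fact
  have iu: "integrable M u" by (rule square_integrable_imp_integrable[OF um i2])
  define c where "c = (\<integral>x. u x \<partial>M)"
  have "(\<integral>x. (u x - c)\<^sup>2 \<partial>M) = (\<integral>x. (u x)\<^sup>2 - 2 * c * u x + c\<^sup>2 \<partial>M)"
    by (rule Bochner_Integration.integral_cong) (auto simp: power2_eq_square algebra_simps)
  also have "\<dots> = (\<integral>x. (u x)\<^sup>2 - 2 * c * u x \<partial>M) + c\<^sup>2"
    using iu i2 by (subst Bochner_Integration.integral_add) (auto simp: prob_space)
  also have "\<dots> = (\<integral>x. (u x)\<^sup>2 \<partial>M) - 2 * c * c + c\<^sup>2"
    using iu i2 by (subst Bochner_Integration.integral_diff) (auto simp: c_def)
  finally show ?thesis by (simp add: c_def power2_eq_square)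
qed

lemma var_pos:
  fixes u :: "'a \<Rightarrow> real"
  assumes "prob_space M" and um: "u \<in> borel_measurable M" and i2: "integrable M (\<lambda>x. (u x)\<^sup>2)"
    and nc: "\<not> (\<exists>c. AE x in M. u x = c)"
  shows "(\<integral>x. u x \<partial>M)\<^sup>2 < (\<integral>x. (u x)\<^sup>2 \<partial>M)"
proof -
  interpret prob_space M by fact
  have iu: "integrable M u" by (rule square_integrable_imp_integrable[OF um i2])
  define c where "c = (\<integral>x. u x \<partial>M)"
  have iv: "integrable M (\<lambda>x. (u x - c)\<^sup>2)"
    using iu i2 by (simp add: power2_eq_square algebra_simps)
  have ge: "0 \<le> (\<integral>x. (u x - c)\<^sup>2 \<partial>M)" by simp
  have ne: "(\<integral>x. (u x - c)\<^sup>2 \<partial>M) \<noteq> 0"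
  proof
    assume "(\<integral>x. (u x - c)\<^sup>2 \<partial>M) = 0"
    then have "AE x in M. (u x - c)\<^sup>2 = 0"
      using integral_nonneg_eq_0_iff_AE[OF iv] by simp
    then have "AE x in M. u x = c" by (rule AE_mp) (auto intro!: AE_I2)
    then show False using nc by blast
  qed
  have "(\<integral>x. (u x - c)\<^sup>2 \<partial>M) = (\<integral>x. (u x)\<^sup>2 \<partial>M) - c\<^sup>2"
    unfolding c_def by (rule var_eq[OF assms(1) um i2])
  then show ?thesis using ge ne by (simp add: c_def)
qed

lemma pos_sq:
  fixes u :: "'a \<Rightarrow> real"
  assumes um: "u \<in> borel_measurable M" and i2: "integrable M (\<lambda>x. (u x)\<^sup>2)"
    and nz: "\<not> (AE x in M. u x = 0)"
  shows "0 < (\<integral>x. (u x)\<^sup>2 \<partial>M)"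
proof -
  have ge: "0 \<le> (\<integral>x. (u x)\<^sup>2 \<partial>M)" by simp
  have "(\<integral>x. (u x)\<^sup>2 \<partial>M) \<noteq> 0"
  proof
    assume "(\<integral>x. (u x)\<^sup>2 \<partial>M) = 0"
    then have "AE x in M. (u x)\<^sup>2 = 0"
      using integral_nonneg_eq_0_iff_AE[OF i2] by simp
    then have "AE x in M. u x = 0" by (rule AE_mp) (auto intro!: AE_I2)
    then show False using nz by blast
  qed
  then show ?thesis using ge by linarith
qed




lemma pair_cube_UI: "pair_prob_space (unit_cube n) unit_interval"
  by (simp add: pair_prob_space_def pair_sigma_finite_def prob_cube prob_UI prob_space_imp_sigma_finite)

lemma phi_facts:
  fixes f :: "(nat \<Rightarrow> real) \<Rightarrow> real"
  assumes i: "i < n" and fm: "f \<in> borel_measurable (unit_cube n)"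
    and f2: "integrable (unit_cube n) (\<lambda>x. (f x)\<^sup>2)"
  shows "(\<lambda>x. \<integral>t. f (x(i:=t)) \<partial>unit_interval) \<in> borel_measurable (unit_cube n)"
    and "integrable (unit_cube n) (\<lambda>x. (\<integral>t. f (x(i:=t)) \<partial>unit_interval)\<^sup>2)"
    and "(\<integral>x. (\<integral>t. f (x(i:=t)) \<partial>unit_interval)\<^sup>2 \<partial>unit_cube n) \<le> (\<integral>x. (f x)\<^sup>2 \<partial>unit_cube n)"
proof -
  interpret P: pair_prob_space "unit_cube n" unit_interval by (rule pair_cube_UI)
  note mu = meas_upd[OF i]
  have Fm: "(\<lambda>p. f ((\<lambda>(x,t). x(i:=t)) p)) \<in> borel_measurable (unit_cube n \<Otimes>\<^sub>M unit_interval)"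
    by (rule measurable_compose[OF mu fm])
  have eqF: "(\<lambda>p. f ((\<lambda>(x,t). x(i:=t)) p)) = case_prod (\<lambda>x t. f (x(i:=t)))"
    by (auto simp: fun_eq_iff)
  have Fm': "case_prod (\<lambda>x t. f (x(i:=t))) \<in> borel_measurable (unit_cube n \<Otimes>\<^sub>M unit_interval)"
    using Fm eqF by simp
  show phim: "(\<lambda>x. \<integral>t. f (x(i:=t)) \<partial>unit_interval) \<in> borel_measurable (unit_cube n)"
    by (rule UI.borel_measurable_lebesgue_integral[OF Fm'])
  have f2m: "(\<lambda>x. (f x)\<^sup>2) \<in> borel_measurable (unit_cube n)" using fm by measurable
  have F2i: "integrable (unit_cube n \<Otimes>\<^sub>M unit_interval) (\<lambda>p. (f ((\<lambda>(x,t). x(i:=t)) p))\<^sup>2)"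
    using f2 integrable_distr_eq[OF mu f2m] distr_upd[OF i] by simp
  have F2i': "integrable (unit_cube n \<Otimes>\<^sub>M unit_interval) (\<lambda>p. (case_prod (\<lambda>x t. f (x(i:=t))) p)\<^sup>2)"
    using F2i eqF by metis
  have intF2: "(\<integral>p. (f ((\<lambda>(x,t). x(i:=t)) p))\<^sup>2 \<partial>(unit_cube n \<Otimes>\<^sub>M unit_interval)) = (\<integral>x. (f x)\<^sup>2 \<partial>unit_cube n)"
    using integral_distr[OF mu f2m] distr_upd[OF i] by simp
  have intF2': "(\<integral>x. (\<integral>t. (f (x(i:=t)))\<^sup>2 \<partial>unit_interval) \<partial>unit_cube n) = (\<integral>x. (f x)\<^sup>2 \<partial>unit_cube n)"
  proof -
    have eq2: "(\<lambda>p. (f ((\<lambda>(x,t). x(i:=t)) p))\<^sup>2) = (\<lambda>p. (case_prod (\<lambda>x t. f (x(i:=t))) p)\<^sup>2)"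
      by (auto simp: fun_eq_iff split: prod.splits)
    show ?thesis using P.integral_fst'[OF F2i'] intF2 unfolding eq2 by simp
  qed
  have bi: "integrable (unit_cube n) (\<lambda>x. \<integral>t. (f (x(i:=t)))\<^sup>2 \<partial>unit_interval)"
    using P.integrable_fst'[OF F2i'] by simp
  have ae: "AE x in unit_cube n. integrable unit_interval (\<lambda>t. (f (x(i:=t)))\<^sup>2)"
    using P.AE_integrable_fst'[OF F2i'] by simp
  have ae2: "AE x in unit_cube n. (\<integral>t. f (x(i:=t)) \<partial>unit_interval)\<^sup>2 \<le> (\<integral>t. (f (x(i:=t)))\<^sup>2 \<partial>unit_interval)"
    using ae AE_space
  proof eventually_elim
    case (elim x)
    have "(\<lambda>t. f (x(i:=t))) \<in> borel_measurable unit_interval"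
      using measurable_compose[OF measurable_Pair1'[OF elim(2), of unit_interval] Fm'] by simp
    then show ?case using jensen_sq[OF prob_UI _ elim(1)] by simp
  qed
  show psi: "integrable (unit_cube n) (\<lambda>x. (\<integral>t. f (x(i:=t)) \<partial>unit_interval)\<^sup>2)"
  proof (rule Bochner_Integration.integrable_bound[OF bi])
    show "(\<lambda>x. (\<integral>t. f (x(i:=t)) \<partial>unit_interval)\<^sup>2) \<in> borel_measurable (unit_cube n)"
      using phim by measurable
    show "AE x in unit_cube n. norm ((\<integral>t. f (x(i:=t)) \<partial>unit_interval)\<^sup>2) \<le> norm (\<integral>t. (f (x(i:=t)))\<^sup>2 \<partial>unit_interval)"
      using ae2 by eventually_elim auto
  qed
  have "(\<integral>x. (\<integral>t. f (x(i:=t)) \<partial>unit_interval)\<^sup>2 \<partial>unit_cube n) \<le> (\<integral>x. (\<integral>t. (f (x(i:=t)))\<^sup>2 \<partial>unit_interval) \<partial>unit_cube n)"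
    by (rule integral_mono_AE[OF psi bi ae2])
  then show "(\<integral>x. (\<integral>t. f (x(i:=t)) \<partial>unit_interval)\<^sup>2 \<partial>unit_cube n) \<le> (\<integral>x. (f x)\<^sup>2 \<partial>unit_cube n)"
    using intF2' by simp
qed




theorem theorem1:
  fixes n m :: nat and f h :: "(nat \<Rightarrow> real) \<Rightarrow> real" and i :: nat
  assumes "n \<ge> 1" and "m \<ge> 1"
    and "f \<in> borel_measurable (unit_cube n)"
    and "integrable (unit_cube n) (\<lambda>x. (f x)\<^sup>2)"
    and "h \<in> borel_measurable (unit_cube m)"
    and "integrable (unit_cube m) (\<lambda>\<xi>. (h \<xi>)\<^sup>2)"
    and "\<not> (\<exists>c. AE x in unit_cube n. f x = c)"
    and "\<not> (AE \<xi> in unit_cube m. h \<xi> = 0)"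
    and "i < n"
  shows "sobol_total (n + m) (tensor_fun n m f h) i =
           ((\<integral>x. (f x)\<^sup>2 \<partial>unit_cube n) - (\<integral>x. f x \<partial>unit_cube n)\<^sup>2)
           / ((\<integral>x. (f x)\<^sup>2 \<partial>unit_cube n)
              - (\<integral>x. f x \<partial>unit_cube n)\<^sup>2 * (\<integral>\<xi>. h \<xi> \<partial>unit_cube m)\<^sup>2
                / (\<integral>\<xi>. (h \<xi>)\<^sup>2 \<partial>unit_cube m))
           * sobol_total n f i
      \<and> sobol_total (n + m) (tensor_fun n m f h) i \<le> sobol_total n f i
      \<and> sobol_total (n + m) (tensor_fun n m f h) i \<ge>
           (1 - (\<integral>x. f x \<partial>unit_cube n)\<^sup>2 / (\<integral>x. (f x)\<^sup>2 \<partial>unit_cube n)) * sobol_total n f i"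
proof -
  note fm = assms(3) and f2 = assms(4) and hm = assms(5) and h2 = assms(6) and i = assms(9)
  interpret Cn: prob_space "unit_cube n" by (rule prob_cube)
  interpret Cm: prob_space "unit_cube m" by (rule prob_cube)
  define A where "A = (\<integral>x. (f x)\<^sup>2 \<partial>unit_cube n)"
  define F0 where "F0 = (\<integral>x. f x \<partial>unit_cube n)"
  define B where "B = (\<integral>x. (h x)\<^sup>2 \<partial>unit_cube m)"
  define H0 where "H0 = (\<integral>x. h x \<partial>unit_cube m)"
  define \<phi> where "\<phi> = (\<lambda>x. \<integral>t. f (x(i:=t)) \<partial>unit_interval)"
  define Q where "Q = (\<integral>x. (\<phi> x)\<^sup>2 \<partial>unit_cube n)"
  have fi: "integrable (unit_cube n) f" by (rule Cn.square_integrable_imp_integrable[OF fm f2])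
  have hi: "integrable (unit_cube m) h" by (rule Cm.square_integrable_imp_integrable[OF hm h2])
  have phim: "\<phi> \<in> borel_measurable (unit_cube n)"
    unfolding \<phi>_def by (rule phi_facts(1)[OF i fm f2])
  have phi2: "integrable (unit_cube n) (\<lambda>x. (\<phi> x)\<^sup>2)"
    unfolding \<phi>_def by (rule phi_facts(2)[OF i fm f2])
  have QA: "Q \<le> A"
    unfolding Q_def A_def \<phi>_def by (rule phi_facts(3)[OF i fm f2])
  have V: "F0\<^sup>2 < A"
    unfolding F0_def A_def by (rule var_pos[OF prob_cube fm f2 assms(7)])
  have Bpos: "0 < B"
    unfolding B_def by (rule pos_sq[OF hm h2 assms(8)])
  have HB: "H0\<^sup>2 \<le> B"
    unfolding H0_def B_def by (rule jensen_sq[OF prob_cube hm h2])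
  have f2m: "(\<lambda>x. (f x)\<^sup>2) \<in> borel_measurable (unit_cube n)" using fm by measurable
  have h2m: "(\<lambda>x. (h x)\<^sup>2) \<in> borel_measurable (unit_cube m)" using hm by measurable
  have phi2m: "(\<lambda>x. (\<phi> x)\<^sup>2) \<in> borel_measurable (unit_cube n)" using phim by measurable
  let ?g = "tensor_fun n m f h"
  have g2: "(\<integral>z. (?g z)\<^sup>2 \<partial>unit_cube (n+m)) = A * B"
  proof -
    have "(\<integral>z. (?g z)\<^sup>2 \<partial>unit_cube (n+m)) = (\<integral>z. (f (restrict z {..<n}))\<^sup>2 * (h (restrict (\<lambda>j. z (n+j)) {..<m}))\<^sup>2 \<partial>unit_cube (n+m))"
      by (simp add: tensor_fun_def power_mult_distrib)
    also have "\<dots> = A * B" unfolding A_def B_def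
      by (rule cube_split[OF f2m h2m f2 h2])
    finally show ?thesis .
  qed
  have g1: "(\<integral>z. ?g z \<partial>unit_cube (n+m)) = F0 * H0"
    unfolding F0_def H0_def tensor_fun_def by (rule cube_split[OF fm hm fi hi])
  have inner: "(\<integral>t. ?g (z(i:=t)) \<partial>unit_interval) = \<phi> (restrict z {..<n}) * h (restrict (\<lambda>j. z (n+j)) {..<m})" for z
  proof -
    have e1: "restrict (z(i:=t)) {..<n} = (restrict z {..<n})(i:=t)" for t
      using i by (auto simp: restrict_def fun_eq_iff)
    have e2: "(\<lambda>j. (z(i:=t)) (n+j)) = (\<lambda>j. z (n+j))" for t
      using i by (auto simp: fun_eq_iff)
    have "(\<integral>t. ?g (z(i:=t)) \<partial>unit_interval) = (\<integral>t. f ((restrict z {..<n})(i:=t)) * h (restrict (\<lambda>j. z (n+j)) {..<m}) \<partial>unit_interval)"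
      unfolding tensor_fun_def e1 e2 by simp
    also have "\<dots> = \<phi> (restrict z {..<n}) * h (restrict (\<lambda>j. z (n+j)) {..<m})"
      unfolding \<phi>_def by (rule integral_mult_left_zero)
    finally show ?thesis .
  qed
  have gq: "(\<integral>z. (\<integral>t. ?g (z(i:=t)) \<partial>unit_interval)\<^sup>2 \<partial>unit_cube (n+m)) = Q * B"
  proof -
    have "(\<integral>z. (\<integral>t. ?g (z(i:=t)) \<partial>unit_interval)\<^sup>2 \<partial>unit_cube (n+m))
        = (\<integral>z. (\<phi> (restrict z {..<n}))\<^sup>2 * (h (restrict (\<lambda>j. z (n+j)) {..<m}))\<^sup>2 \<partial>unit_cube (n+m))"
      unfolding inner by (simp add: power_mult_distrib)
    also have "\<dots> = Q * B" unfolding Q_def B_def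
      by (rule cube_split[OF phi2m h2m phi2 h2])
    finally show ?thesis .
  qed
  have Sg: "sobol_total (n + m) ?g i = (A * B - Q * B) / (A * B - (F0 * H0)\<^sup>2)"
    unfolding sobol_total_def g2 g1 gq ..
  have Sf: "sobol_total n f i = (A - Q) / (A - F0\<^sup>2)"
    unfolding sobol_total_def A_def F0_def Q_def \<phi>_def ..
  have A0: "0 < A" using V by (smt (verit) zero_le_power2)
  have F0H: "F0\<^sup>2 * H0\<^sup>2 / B \<le> F0\<^sup>2"
    using HB Bpos by (simp add: divide_le_eq mult_left_mono)
  have F0H0: "0 \<le> F0\<^sup>2 * H0\<^sup>2 / B" using Bpos by simp
  define D where "D = A - F0\<^sup>2 * H0\<^sup>2 / B"
  have DV: "A - F0\<^sup>2 \<le> D" unfolding D_def using F0H by linarith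
  have DA: "D \<le> A" unfolding D_def using F0H0 by linarith
  have Dpos: "0 < D" using DV V by linarith
  have Sg': "sobol_total (n + m) ?g i = (A - Q) / D"
  proof -
    have "A * B - (F0 * H0)\<^sup>2 = D * B" unfolding D_def using Bpos
      by (simp add: field_simps power_mult_distrib)
    then show ?thesis unfolding Sg using Bpos by (simp add: left_diff_distrib[symmetric])
  qed
  have AQ: "0 \<le> A - Q" using QA by simp
  have c1: "sobol_total (n + m) ?g i = (A - F0\<^sup>2) / D * sobol_total n f i"
    unfolding Sg' Sf using V by simp
  have c2: "sobol_total (n + m) ?g i \<le> sobol_total n f i"
    unfolding Sg' Sf using V Dpos DV AQ by (intro divide_left_mono) (auto simp: mult_pos_pos)
  have c3: "(1 - F0\<^sup>2 / A) * sobol_total n f i \<le> sobol_total (n + m) ?g i"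
  proof -
    have "(1 - F0\<^sup>2 / A) * sobol_total n f i = (A - Q) / A"
      unfolding Sf using V A0 by (simp add: field_simps)
    also have "\<dots> \<le> (A - Q) / D"
      using AQ Dpos DA by (intro divide_left_mono) (auto simp: mult_pos_pos)
    finally show ?thesis unfolding Sg' .
  qed
  show ?thesis
    using c1 c2 c3 unfolding A_def F0_def B_def H0_def D_def by simp
qed


end
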